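(* Let $p,k\ge 1$ be integers, let $a_1,\dots,a_k\in\mathbb{R}$, and let $\mathbf{f}:\mathbb{R}^p\to\mathbb{R}^p$ be a differentiable flux. Let $\mathbb{M}_1,\dots,\mathbb{M}_k:\mathbb{R}^p\to\mathbb{R}^p$ be differentiable maps (the Maxwellians) satisfying, for all $\mathbf{u}$, $$\sum_{i=1}^k \mathbb{M}_i(\mathbf{u})=\mathbf{u},\qquad \sum_{i=1}^k a_i\,\mathbb{M}_i(\mathbf{u})=\mathbf{f}(\mathbf{u}),$$ and define $\mathbf{m}_2(\mathbf{u})=\sum_{i=1}^k a_i^2\,\mathbb{M}_i(\mathbf{u})$. Fix $\mathbf{u}$ and suppose there exists a strictly convex entropy $\eta(\mathbf{u})$ with Hessian matrix $\mathbf{A}_0$ such that: 1. $\mathbf{A}_0\mathbf{f}'(\mathbf{u})$ is symmetric; 2. the Maxwellians are monotone: $\mathbf{A}_0\mathbb{M}_i'(\mathbf{u})$ is symmetric positive definite for all $i\in\{1,\dots,k\}$; 3. $\min_i |a_i| > \rho(\mathbf{f}'(\mathbf{u}))$, where $\rho$ denotes the spectral radius. Then the matrix $\mathbf{K}=\mathbf{A}_0\left[\mathbf{m}_2'(\mathbf{u})-(\mathbf{f}'(\mathbf{u}))^2\right]$ is symmetric positive semi-definite.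
   Context: This arises from a kinetic (BGK-type) model with unknowns $\mathbf{F}\in\mathbb{R}^{kp}$, diagonal velocity matrix $\Lambda=\mathrm{diag}(a_1\mathbf{I}_p,\dots,a_k\mathbf{I}_p)$, projector $\mathbb{P}=(\mathbf{I}_p\ \cdots\ \mathbf{I}_p)$ and Maxwellian $\mathbb{M}=(\mathbb{M}_1,\dots,\mathbb{M}_k)$ satisfying $\mathbb{P}\mathbb{M}(\mathbf{u})=\mathbf{u}$ and $\mathbb{P}\Lambda\mathbb{M}(\mathbf{u})=\mathbf{f}(\mathbf{u})$; then $\mathbf{m}_2=\mathbb{P}\Lambda^2\mathbb{M}$ is the second moment of the Maxwellian. Primes denote Jacobian matrices with respect to $\mathbf{u}$; $\mathbf{A}_0$ is symmetric positive definite since $\eta$ is strictly convex. *)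

theory Defs
  imports "HOL-Analysis.Analysis"
begin

definition jacobian :: "(real^'n \<Rightarrow> real^'m) \<Rightarrow> real^'n \<Rightarrow> real^'n^'m" where
  "jacobian f x = matrix (frechet_derivative f (at x))"

definition has_hessian :: "(real^'n \<Rightarrow> real) \<Rightarrow> real^'n^'n \<Rightarrow> real^'n \<Rightarrow> bool" where
  "has_hessian eta H x \<longleftrightarrow>
     (\<exists>g. (\<forall>y. (eta has_derivative (\<lambda>h. g y \<bullet> h)) (at y)) \<and>
          (g has_derivative (\<lambda>h. H *v h)) (at x))"

definition strictly_convex :: "(real^'n \<Rightarrow> real) \<Rightarrow> bool" where
  "strictly_convex eta \<longleftrightarrow>
     (\<forall>x y t. x \<noteq> y \<longrightarrow> 0 < t \<longrightarrow> t < 1 \<longrightarrow>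
        eta ((1 - t) *\<^sub>R x + t *\<^sub>R y) < (1 - t) * eta x + t * eta y)"

definition symmetric_mat :: "real^'n^'n \<Rightarrow> bool" where
  "symmetric_mat A \<longleftrightarrow> transpose A = A"

definition pos_def_mat :: "real^'n^'n \<Rightarrow> bool" where
  "pos_def_mat A \<longleftrightarrow> (\<forall>x. x \<noteq> 0 \<longrightarrow> 0 < x \<bullet> (A *v x))"

definition pos_semidef_mat :: "real^'n^'n \<Rightarrow> bool" where
  "pos_semidef_mat A \<longleftrightarrow> (\<forall>x. 0 \<le> x \<bullet> (A *v x))"

definition complexify :: "real^'n^'n \<Rightarrow> complex^'n^'n" where
  "complexify A = (\<chi> i j. complex_of_real (A $ i $ j))"

definition eigenvalues_c :: "real^'n^'n \<Rightarrow> complex set" where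
  "eigenvalues_c A = {l. \<exists>v. v \<noteq> 0 \<and> complexify A *v v = l *s v}"

definition spectral_radius :: "real^'n^'n \<Rightarrow> real" where
  "spectral_radius A = Sup (cmod ` eigenvalues_c A)"

end

theory Submission
  imports Defs
begin

lemma sym_iff:
  fixes A :: "real^'n^'n"
  shows "symmetric_mat A \<longleftrightarrow> (\<forall>x y. x \<bullet> (A *v y) = y \<bullet> (A *v x))"
proof
  assume "symmetric_mat A"
  hence t: "transpose A = A" by (simp add: symmetric_mat_def)
  show "\<forall>x y. x \<bullet> (A *v y) = y \<bullet> (A *v x)"
  proof (intro allI)
    fix x y :: "real^'n"
    have "x \<bullet> (A *v y) = x \<bullet> (transpose A *v y)" using t by simp
    also have "\<dots> = (y v* A) \<bullet> x" by (simp add: inner_commute)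
    also have "\<dots> = y \<bullet> (A *v x)" by (simp add: dot_lmul_matrix)
    finally show "x \<bullet> (A *v y) = y \<bullet> (A *v x)" .
  qed
next
  assume h: "\<forall>x y. x \<bullet> (A *v y) = y \<bullet> (A *v x)"
  have "transpose A *v y = A *v y" for y
  proof -
    have e: "x \<bullet> (transpose A *v y) = x \<bullet> (A *v y)" for x
    proof -
      have "x \<bullet> (transpose A *v y) = (y v* A) \<bullet> x" by (simp add: inner_commute)
      also have "\<dots> = y \<bullet> (A *v x)" by (simp add: dot_lmul_matrix)
      finally show ?thesis using h by simp
    qed
    have "(transpose A *v y - A *v y) \<bullet> (transpose A *v y - A *v y) = 0"
      using e[of "transpose A *v y - A *v y"] by (simp add: inner_diff_right inner_diff_left)
    thus ?thesis by simp
  qed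
  hence "transpose A = A" by (simp add: matrix_eq)
  thus "symmetric_mat A" by (simp add: symmetric_mat_def)
qed

lemma jac_works:
  fixes g :: "real^'n \<Rightarrow> real^'m"
  assumes "(g has_derivative D) (at u)"
  shows "jacobian g u *v h = D h"
proof -
  have "D = frechet_derivative g (at u)" using assms by (rule frechet_derivative_at)
  moreover have "linear D" using assms by (rule has_derivative_linear)
  ultimately show ?thesis unfolding jacobian_def by (simp add: matrix_works)
qed

lemma jac_lincomb:
  fixes M :: "'k::finite \<Rightarrow> real^'n \<Rightarrow> real^'m"
  assumes "\<And>i. M i differentiable (at u)"
  shows "jacobian (\<lambda>v. \<Sum>i\<in>UNIV. c i *\<^sub>R M i v) u *v h = (\<Sum>i\<in>UNIV. c i *\<^sub>R (jacobian (M i) u *v h))"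
proof -
  have d: "(M i has_derivative frechet_derivative (M i) (at u)) (at u)" for i
    using assms frechet_derivative_works by blast
  have "((\<lambda>v. \<Sum>i\<in>UNIV. c i *\<^sub>R M i v) has_derivative
      (\<lambda>h. \<Sum>i\<in>UNIV. c i *\<^sub>R frechet_derivative (M i) (at u) h)) (at u)"
    by (intro has_derivative_sum has_derivative_scaleR_right d)
  hence "jacobian (\<lambda>v. \<Sum>i\<in>UNIV. c i *\<^sub>R M i v) u *v h
      = (\<Sum>i\<in>UNIV. c i *\<^sub>R frechet_derivative (M i) (at u) h)" by (rule jac_works)
  also have "\<dots> = (\<Sum>i\<in>UNIV. c i *\<^sub>R (jacobian (M i) u *v h))"
    using jac_works[OF d] by simp
  finally show ?thesis .
qed

lemma mv_sum:
  fixes A :: "real^'n^'m"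
  shows "A *v (\<Sum>i\<in>S. c i *\<^sub>R v i) = (\<Sum>i\<in>S. c i *\<^sub>R (A *v v i))"
proof -
  have l: "linear ((*v) A)" by (rule matrix_vector_mul_linear)
  show ?thesis by (simp add: linear_sum[OF l] linear_scale[OF l])
qed

theorem proposition1:
  fixes a :: "'k::finite \<Rightarrow> real"
    and f :: "real^'p \<Rightarrow> real^'p"
    and M :: "'k \<Rightarrow> real^'p \<Rightarrow> real^'p"
    and u :: "real^'p"
    and eta :: "real^'p \<Rightarrow> real"
    and A0 :: "real^'p^'p"
  assumes f_diff: "\<And>v. f differentiable (at v)"
    and M_diff: "\<And>i v. M i differentiable (at v)"
    and M_sum: "\<And>v. (\<Sum>i\<in>UNIV. M i v) = v"
    and M_flux: "\<And>v. (\<Sum>i\<in>UNIV. a i *\<^sub>R M i v) = f v"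
    and eta_convex: "strictly_convex eta"
    and eta_hess: "has_hessian eta A0 u"
    and A0_pd: "symmetric_mat A0" "pos_def_mat A0"
    and sym_flux: "symmetric_mat (A0 ** jacobian f u)"
    and monotone: "\<And>i. symmetric_mat (A0 ** jacobian (M i) u) \<and> pos_def_mat (A0 ** jacobian (M i) u)"
    and subchar: "(MIN i. \<bar>a i\<bar>) > spectral_radius (jacobian f u)"
  shows "symmetric_mat (A0 ** (jacobian (\<lambda>v. \<Sum>i\<in>UNIV. (a i)\<^sup>2 *\<^sub>R M i v) u
                               - jacobian f u ** jacobian f u))
       \<and> pos_semidef_mat (A0 ** (jacobian (\<lambda>v. \<Sum>i\<in>UNIV. (a i)\<^sup>2 *\<^sub>R M i v) u
                               - jacobian f u ** jacobian f u))"
proof -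
  define J where "J i = jacobian (M i) u" for i
  define F where "F = jacobian f u"
  define G where "G = jacobian (\<lambda>v. \<Sum>i\<in>UNIV. (a i)\<^sup>2 *\<^sub>R M i v) u"
  have hG: "G *v h = (\<Sum>i\<in>UNIV. (a i)\<^sup>2 *\<^sub>R (J i *v h))" for h
    unfolding G_def J_def by (rule jac_lincomb[where M=M and u=u, OF M_diff])
  have "f = (\<lambda>v. \<Sum>i\<in>UNIV. a i *\<^sub>R M i v)" using M_flux by auto
  hence hF: "F *v h = (\<Sum>i\<in>UNIV. a i *\<^sub>R (J i *v h))" for h
    unfolding F_def J_def using jac_lincomb[where M=M and u=u, OF M_diff] by simp
  have "(\<lambda>v. v) = (\<lambda>v. \<Sum>i\<in>UNIV. 1 *\<^sub>R M i v)" using M_sum by auto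
  moreover have "jacobian (\<lambda>v. v) u *v h = h" for h :: "real^'p"
    by (rule jac_works) (rule has_derivative_ident)
  ultimately have hJ: "(\<Sum>i\<in>UNIV. (J i *v h)) = h" for h
    unfolding J_def using jac_lincomb[where M=M and u=u, OF M_diff, where c="\<lambda>_. 1" and h=h] by simp
  have A0s: "x \<bullet> (A0 *v y) = y \<bullet> (A0 *v x)" for x y
    using A0_pd(1) sym_iff by blast
  have AFs: "x \<bullet> (A0 *v (F *v y)) = y \<bullet> (A0 *v (F *v x))" for x y
    using sym_flux sym_iff[of "A0 ** F"] unfolding F_def by (simp add: matrix_vector_mul_assoc)
  have Ss: "x \<bullet> (A0 *v (J i *v y)) = y \<bullet> (A0 *v (J i *v x))" for x y i
    using monotone[of i] sym_iff[of "A0 ** J i"] unfolding J_def by (simp add: matrix_vector_mul_assoc)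
  have Sp: "0 \<le> x \<bullet> (A0 *v (J i *v x))" for x i
  proof (cases "x = 0")
    case False
    thus ?thesis using monotone[of i] unfolding pos_def_mat_def J_def
      by (simp add: matrix_vector_mul_assoc less_imp_le)
  qed simp
  define K where "K = A0 ** (G - F ** F)"
  have Kv: "x \<bullet> (K *v y) = (\<Sum>i\<in>UNIV. (a i)\<^sup>2 * (x \<bullet> (A0 *v (J i *v y))))
      - (F *v y) \<bullet> (A0 *v (F *v x))" for x y
  proof -
    have "K *v y = A0 *v (G *v y) - A0 *v (F *v (F *v y))"
      unfolding K_def by (simp add: matrix_vector_mul_assoc[symmetric] matrix_vector_mult_diff_distrib
          matrix_vector_mult_diff_rdistrib)
    hence "x \<bullet> (K *v y) = x \<bullet> (A0 *v (G *v y)) - x \<bullet> (A0 *v (F *v (F *v y)))"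
      by (simp add: inner_diff_right)
    also have "x \<bullet> (A0 *v (G *v y)) = (\<Sum>i\<in>UNIV. (a i)\<^sup>2 * (x \<bullet> (A0 *v (J i *v y))))"
      unfolding hG mv_sum by (simp add: inner_sum_right)
    also have "x \<bullet> (A0 *v (F *v (F *v y))) = (F *v y) \<bullet> (A0 *v (F *v x))" by (rule AFs)
    finally show ?thesis .
  qed
  have sym: "symmetric_mat K"
    unfolding sym_iff
  proof (intro allI)
    fix x y
    have "(F *v y) \<bullet> (A0 *v (F *v x)) = (F *v x) \<bullet> (A0 *v (F *v y))" by (rule A0s)
    moreover have "(\<Sum>i\<in>UNIV. (a i)\<^sup>2 * (x \<bullet> (A0 *v (J i *v y)))) = (\<Sum>i\<in>UNIV. (a i)\<^sup>2 * (y \<bullet> (A0 *v (J i *v x))))"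
      using Ss by simp
    ultimately show "x \<bullet> (K *v y) = y \<bullet> (K *v x)" unfolding Kv by simp
  qed
  have psd: "pos_semidef_mat K"
    unfolding pos_semidef_mat_def
  proof
    fix x
    define y where "y = F *v x"
    define q where "q i v w = v \<bullet> (A0 *v (J i *v w))" for i v w
    have qlin: "q i (a i *\<^sub>R x - y) (a i *\<^sub>R x - y) = (a i)\<^sup>2 * q i x x - 2 * a i * q i y x + q i y y" for i
      unfolding q_def using Ss[of x i y]
      by (simp add: matrix_vector_mult_diff_distrib matrix_vector_mult_scaleR
          inner_diff_left inner_diff_right algebra_simps power2_eq_square)
    have "0 \<le> (\<Sum>i\<in>UNIV. q i (a i *\<^sub>R x - y) (a i *\<^sub>R x - y))"
      unfolding q_def by (intro sum_nonneg Sp)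
    also have "\<dots> = (\<Sum>i\<in>UNIV. (a i)\<^sup>2 * q i x x) - 2 * (\<Sum>i\<in>UNIV. a i * q i y x) + (\<Sum>i\<in>UNIV. q i y y)"
      unfolding qlin by (simp add: sum.distrib sum_subtractf sum_distrib_left algebra_simps)
    also have "(\<Sum>i\<in>UNIV. a i * q i y x) = y \<bullet> (A0 *v y)"
      unfolding q_def y_def hF mv_sum by (simp add: inner_sum_right)
    also have "(\<Sum>i\<in>UNIV. q i y y) = y \<bullet> (A0 *v y)"
    proof -
      have "(\<Sum>i\<in>UNIV. q i y y) = y \<bullet> (A0 *v (\<Sum>i\<in>UNIV. 1 *\<^sub>R (J i *v y)))"
        unfolding q_def mv_sum by (simp add: inner_sum_right)
      thus ?thesis using hJ by simp
    qed
    finally have "0 \<le> (\<Sum>i\<in>UNIV. (a i)\<^sup>2 * q i x x) - y \<bullet> (A0 *v y)" by simp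
    thus "0 \<le> x \<bullet> (K *v x)" unfolding Kv q_def y_def .
  qed
  show ?thesis using sym psd unfolding K_def F_def G_def by simp
qed

end
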